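(* In the setting described in the context, $\mathbb E\left[\sum_{k\in U}f_\tau(k)w_k\right]\ge(1-e^{-1})R/4$, where the expectation is over the random experiment for SA2 and $R$ is the maximum total reward of a feasible service placement.
   Context: An SPSC instance: finite sets $S$ (services), $V$ (nodes), $U$ (users); sizes $s_i>0$; capacities $c_j>0$; for each user $k$ a service $i_k\in S$, a set $T_k\subseteq V$, a reward $w_k>0$. A placement $X=\{X_i\subseteq V\}$ is feasible iff $\sum_is_i\mathbf 1[j\in X_i]\le c_j$ for all $j$; its total reward is $\sum_kw_k\mathbf 1[T_k\cap X_{i_k}\ne\emptyset]$. Let $\{x_{ij}\},\{y_k\}$ be an optimal solution of the LP with nonnegative variables: maximize $\sum_ky_kw_k$ s.t. $y_k\le\sum_{j\in T_k}x_{i_kj}$, $y_k\le1$; $\sum_ix_{ij}s_i\le c_j$; $x_{ij}=0$ if $s_i>c_j$; $0\le x_{ij}\le1$. Let $\beta:=1/4,\gamma:=1/2,\delta:=1/4$, $\mathbb N=\{1,2,\dots\}$. For $j\in V$: $P_j^\oplus:=\{i:c_j/2<s_i\le c_j\}$, $P_j^\ominus:=\{i:c_j/4<s_i\le c_j/2\}$, $P_j^q:=\{i:\gamma^qc_j\beta<s_i\le\gamma^{q-1}c_j\beta\}$ ($q\in\mathbb N$); $d_j^q:=\sum_{i\in P_j^q}x_{ij}$ for $q\in\mathbb N\cup\{\oplus,\ominus\}$; $v_j:=\delta c_j/\sum_{i:s_i\le c_j\beta}s_ix_{ij}$; $n_j^q:=\lceil v_jd_j^q\rceil$; $h_j:=d_j^\ominus$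 if $d_j^\ominus<2$, else $d_j^\ominus/2$. A construction map $\zeta:V\to\{1,2,3\}$ has slot set $\Lambda(\zeta)$ (slot $\sigma$ has node $\nu(\sigma)$, class $\kappa(\sigma)$): for each $j$, one slot of class $\oplus$ if $\zeta(j)=1$; two slots of class $\ominus$ if $\zeta(j)=2$; for each $q\in\mathbb N$, $n_j^q$ slots of class $q$ if $\zeta(j)=3$; no other slots on $j$. A slot allocation of $\Lambda$ is $\tau:\Lambda\to S$ with $\tau(\sigma)\in P^{\kappa(\sigma)}_{\nu(\sigma)}$; $X^\tau_i:=\{j:\exists\sigma,\nu(\sigma)=j,\tau(\sigma)=i\}$; $f_\tau(k):=\mathbf 1[T_k\cap X^\tau_{i_k}\ne\emptyset]$. Random experiment: $\zeta(j)$ independent over $j$, equal to $1,2,3$ with probabilities $\delta d_j^\oplus,\ \delta h_j,\ 1-\delta d_j^\oplus-\delta h_j$; given $\zeta$, each slot $\sigma\in\Lambda(\zeta)$ independently gets $\tau(\sigma)=i$ with probability $x_{i\nu(\sigma)}/d^{\kappa(\sigma)}_{\nu(\sigma)}$, $i\in P^{\kappa(\sigma)}_{\nu(\sigma)}$. *)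

theory Defs
  imports Complex_Main "HOL-Library.FuncSet"
begin

text \<open>SPSC instance data: services S (type 's), nodes V (type 'v), users U (type 'u);
  sizes s, capacities c, requested service isvc k, node set T k, reward w k.\<close>

definition spsc_instance ::
  "'s set \<Rightarrow> 'v set \<Rightarrow> 'u set \<Rightarrow> ('s \<Rightarrow> real) \<Rightarrow> ('v \<Rightarrow> real) \<Rightarrow>
   ('u \<Rightarrow> 's) \<Rightarrow> ('u \<Rightarrow> 'v set) \<Rightarrow> ('u \<Rightarrow> real) \<Rightarrow> bool" where
  "spsc_instance S V U s c isvc T w \<longleftrightarrow>
     finite S \<and> finite V \<and> finite U \<and>
     (\<forall>i\<in>S. s i > 0) \<and> (\<forall>j\<in>V. c j > 0) \<and>
     (\<forall>k\<in>U. isvc k \<in> S \<and> T k \<subseteq> V \<and> w k > 0)"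

definition feasible_placement ::
  "'s set \<Rightarrow> 'v set \<Rightarrow> ('s \<Rightarrow> real) \<Rightarrow> ('v \<Rightarrow> real) \<Rightarrow> ('s \<Rightarrow> 'v set) \<Rightarrow> bool" where
  "feasible_placement S V s c X \<longleftrightarrow>
     (\<forall>i\<in>S. X i \<subseteq> V) \<and>
     (\<forall>j\<in>V. (\<Sum>i\<in>S. s i * (if j \<in> X i then 1 else 0)) \<le> c j)"

definition total_reward ::
  "'u set \<Rightarrow> ('u \<Rightarrow> 's) \<Rightarrow> ('u \<Rightarrow> 'v set) \<Rightarrow> ('u \<Rightarrow> real) \<Rightarrow> ('s \<Rightarrow> 'v set) \<Rightarrow> real" where
  "total_reward U isvc T w X = (\<Sum>k\<in>U. w k * (if T k \<inter> X (isvc k) \<noteq> {} then 1 else 0))"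

text \<open>R: maximum total reward over feasible placements (placements as extensional
  functions on S, so the set of placements is finite).\<close>

definition opt_reward ::
  "'s set \<Rightarrow> 'v set \<Rightarrow> 'u set \<Rightarrow> ('s \<Rightarrow> real) \<Rightarrow> ('v \<Rightarrow> real) \<Rightarrow>
   ('u \<Rightarrow> 's) \<Rightarrow> ('u \<Rightarrow> 'v set) \<Rightarrow> ('u \<Rightarrow> real) \<Rightarrow> real" where
  "opt_reward S V U s c isvc T w =
     Max (total_reward U isvc T w ` {X \<in> S \<rightarrow>\<^sub>E Pow V. feasible_placement S V s c X})"

definition lp_feasible ::
  "'s set \<Rightarrow> 'v set \<Rightarrow> 'u set \<Rightarrow> ('s \<Rightarrow> real) \<Rightarrow> ('v \<Rightarrow> real) \<Rightarrow>
   ('u \<Rightarrow> 's) \<Rightarrow> ('u \<Rightarrow> 'v set) \<Rightarrow> ('s \<Rightarrow> 'v \<Rightarrow> real) \<Rightarrow> ('u \<Rightarrow> real) \<Rightarrow> bool" where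
  "lp_feasible S V U s c isvc T x y \<longleftrightarrow>
     (\<forall>k\<in>U. 0 \<le> y k \<and> y k \<le> (\<Sum>j\<in>T k. x (isvc k) j) \<and> y k \<le> 1) \<and>
     (\<forall>j\<in>V. (\<Sum>i\<in>S. x i j * s i) \<le> c j) \<and>
     (\<forall>i\<in>S. \<forall>j\<in>V. 0 \<le> x i j \<and> x i j \<le> 1 \<and> (s i > c j \<longrightarrow> x i j = 0))"

definition lp_optimal ::
  "'s set \<Rightarrow> 'v set \<Rightarrow> 'u set \<Rightarrow> ('s \<Rightarrow> real) \<Rightarrow> ('v \<Rightarrow> real) \<Rightarrow>
   ('u \<Rightarrow> 's) \<Rightarrow> ('u \<Rightarrow> 'v set) \<Rightarrow> ('u \<Rightarrow> real) \<Rightarrow>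
   ('s \<Rightarrow> 'v \<Rightarrow> real) \<Rightarrow> ('u \<Rightarrow> real) \<Rightarrow> bool" where
  "lp_optimal S V U s c isvc T w x y \<longleftrightarrow>
     lp_feasible S V U s c isvc T x y \<and>
     (\<forall>x' y'. lp_feasible S V U s c isvc T x' y' \<longrightarrow>
        (\<Sum>k\<in>U. y' k * w k) \<le> (\<Sum>k\<in>U. y k * w k))"

text \<open>Size classes: Plus = \<oplus>, Minus = \<ominus>, Lvl q = q (q \<ge> 1).
  Constants beta = 1/4, gamma = 1/2, delta = 1/4.\<close>

datatype cls = Plus | Minus | Lvl nat

definition Pcls :: "'s set \<Rightarrow> ('s \<Rightarrow> real) \<Rightarrow> ('v \<Rightarrow> real) \<Rightarrow> 'v \<Rightarrow> cls \<Rightarrow> 's set" where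
  "Pcls S s c j \<kappa> = (case \<kappa> of
      Plus \<Rightarrow> {i\<in>S. c j / 2 < s i \<and> s i \<le> c j}
    | Minus \<Rightarrow> {i\<in>S. c j / 4 < s i \<and> s i \<le> c j / 2}
    | Lvl q \<Rightarrow> {i\<in>S. (1/2) ^ q * c j * (1/4) < s i \<and> s i \<le> (1/2) ^ (q - 1) * c j * (1/4)})"

definition dcls :: "'s set \<Rightarrow> ('s \<Rightarrow> real) \<Rightarrow> ('v \<Rightarrow> real) \<Rightarrow> ('s \<Rightarrow> 'v \<Rightarrow> real) \<Rightarrow> 'v \<Rightarrow> cls \<Rightarrow> real" where
  "dcls S s c x j \<kappa> = (\<Sum>i\<in>Pcls S s c j \<kappa>. x i j)"

definition vnode :: "'s set \<Rightarrow> ('s \<Rightarrow> real) \<Rightarrow> ('v \<Rightarrow> real) \<Rightarrow> ('s \<Rightarrow> 'v \<Rightarrow> real) \<Rightarrow> 'v \<Rightarrow> real" where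
  "vnode S s c x j = (1/4) * c j / (\<Sum>i\<in>{i\<in>S. s i \<le> c j * (1/4)}. s i * x i j)"

definition ncnt :: "'s set \<Rightarrow> ('s \<Rightarrow> real) \<Rightarrow> ('v \<Rightarrow> real) \<Rightarrow> ('s \<Rightarrow> 'v \<Rightarrow> real) \<Rightarrow> 'v \<Rightarrow> nat \<Rightarrow> nat" where
  "ncnt S s c x j q = nat \<lceil>vnode S s c x j * dcls S s c x j (Lvl q)\<rceil>"

definition hnode :: "'s set \<Rightarrow> ('s \<Rightarrow> real) \<Rightarrow> ('v \<Rightarrow> real) \<Rightarrow> ('s \<Rightarrow> 'v \<Rightarrow> real) \<Rightarrow> 'v \<Rightarrow> real" where
  "hnode S s c x j = (if dcls S s c x j Minus < 2 then dcls S s c x j Minus else dcls S s c x j Minus / 2)"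

text \<open>Slots of a construction map zeta : V \<rightarrow> {1,2,3}. A slot is (node, class, copy index).\<close>

definition slots :: "'s set \<Rightarrow> 'v set \<Rightarrow> ('s \<Rightarrow> real) \<Rightarrow> ('v \<Rightarrow> real) \<Rightarrow> ('s \<Rightarrow> 'v \<Rightarrow> real) \<Rightarrow>
    ('v \<Rightarrow> nat) \<Rightarrow> ('v \<times> cls \<times> nat) set" where
  "slots S V s c x \<zeta> =
     {(j, Plus, 0) | j. j \<in> V \<and> \<zeta> j = 1} \<union>
     {(j, Minus, m) | j m. j \<in> V \<and> \<zeta> j = 2 \<and> m < 2} \<union>
     {(j, Lvl q, m) | j q m. j \<in> V \<and> \<zeta> j = 3 \<and> 1 \<le> q \<and> m < ncnt S s c x j q}"

definition allocations :: "'s set \<Rightarrow> 'v set \<Rightarrow> ('s \<Rightarrow> real) \<Rightarrow> ('v \<Rightarrow> real) \<Rightarrow> ('s \<Rightarrow> 'v \<Rightarrow> real) \<Rightarrow>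
    ('v \<Rightarrow> nat) \<Rightarrow> ('v \<times> cls \<times> nat \<Rightarrow> 's) set" where
  "allocations S V s c x \<zeta> =
     (\<Pi>\<^sub>E \<sigma>\<in>slots S V s c x \<zeta>. Pcls S s c (fst \<sigma>) (fst (snd \<sigma>)))"

definition placement_of :: "('v \<times> cls \<times> nat) set \<Rightarrow> ('v \<times> cls \<times> nat \<Rightarrow> 's) \<Rightarrow> 's \<Rightarrow> 'v set" where
  "placement_of \<Lambda> \<tau> i = {j. \<exists>\<sigma>\<in>\<Lambda>. fst \<sigma> = j \<and> \<tau> \<sigma> = i}"

definition zeta_prob :: "'s set \<Rightarrow> ('s \<Rightarrow> real) \<Rightarrow> ('v \<Rightarrow> real) \<Rightarrow> ('s \<Rightarrow> 'v \<Rightarrow> real) \<Rightarrow> 'v \<Rightarrow> nat \<Rightarrow> real" where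
  "zeta_prob S s c x j a =
     (if a = 1 then (1/4) * dcls S s c x j Plus
      else if a = 2 then (1/4) * hnode S s c x j
      else 1 - (1/4) * dcls S s c x j Plus - (1/4) * hnode S s c x j)"

definition tau_prob :: "'s set \<Rightarrow> 'v set \<Rightarrow> ('s \<Rightarrow> real) \<Rightarrow> ('v \<Rightarrow> real) \<Rightarrow> ('s \<Rightarrow> 'v \<Rightarrow> real) \<Rightarrow>
    ('v \<Rightarrow> nat) \<Rightarrow> ('v \<times> cls \<times> nat \<Rightarrow> 's) \<Rightarrow> real" where
  "tau_prob S V s c x \<zeta> \<tau> =
     (\<Prod>\<sigma>\<in>slots S V s c x \<zeta>. x (\<tau> \<sigma>) (fst \<sigma>) / dcls S s c x (fst \<sigma>) (fst (snd \<sigma>)))"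

text \<open>Expected reward E[sum_k f_tau(k) w_k] of the random experiment (SA2),
  written as the finite sum over all outcomes (zeta, tau) of probability times reward.\<close>

definition expected_reward ::
  "'s set \<Rightarrow> 'v set \<Rightarrow> 'u set \<Rightarrow> ('s \<Rightarrow> real) \<Rightarrow> ('v \<Rightarrow> real) \<Rightarrow>
   ('u \<Rightarrow> 's) \<Rightarrow> ('u \<Rightarrow> 'v set) \<Rightarrow> ('u \<Rightarrow> real) \<Rightarrow> ('s \<Rightarrow> 'v \<Rightarrow> real) \<Rightarrow> real" where
  "expected_reward S V U s c isvc T w x =
     (\<Sum>\<zeta>\<in>(V \<rightarrow>\<^sub>E {1, 2, 3::nat}).
        (\<Prod>j\<in>V. zeta_prob S s c x j (\<zeta> j)) *
        (\<Sum>\<tau>\<in>allocations S V s c x \<zeta>.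
           tau_prob S V s c x \<zeta> \<tau> *
           (\<Sum>k\<in>U. (if T k \<inter> placement_of (slots S V s c x \<zeta>) \<tau> (isvc k) \<noteq> {} then 1 else 0) * w k)))"

end

theory Submission
  imports Defs "HOL-Analysis.Convex"
begin

definition phi :: "real \<Rightarrow> real" where "phi z = (1 - exp (- z)) / 4"

lemma exp_conv: assumes "0 \<le> l" "l \<le> (1::real)" shows "exp (- (l * z)) \<le> l * exp (- z) + (1 - l)"
proof -
  have "exp ((1 - l) *\<^sub>R 0 + l *\<^sub>R (- z)) \<le> (1 - l) * exp 0 + l * exp (- z)"
    using convex_onD[OF exp_convex, of l 0 "-z"] assms by auto
  then show ?thesis by (simp add: algebra_simps)
qed

lemma one_minus_exp_scale: assumes "0 \<le> l" "l \<le> (1::real)" shows "l * (1 - exp (- z)) \<le> 1 - exp (- (l * z))"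
  using exp_conv[OF assms, of z] by (simp add: right_diff_distrib)

lemma one_minus_exp_le: "1 - exp (- z) \<le> (z::real)"
  using exp_ge_add_one_self[of "-z"] by simp

lemma one_minus_exp_le2: assumes "0 \<le> z" "z \<le> (2::real)" shows "1 - exp (- z) \<le> z - z^2/4"
proof -
  have "1 - z/2 \<le> exp (- (z/2))" using exp_ge_add_one_self[of "-(z/2)"] by simp
  moreover have "0 \<le> 1 - z/2" using assms by simp
  ultimately have "(1 - z/2)^2 \<le> (exp (- (z/2)))^2" by (intro power_mono) auto
  also have "(exp (- (z/2)))^2 = exp (- z)" by (simp add: power2_eq_square exp_add[symmetric])
  finally show ?thesis by (simp add: power2_eq_square algebra_simps)
qed

lemma phi_le2: assumes "0 \<le> z" "z \<le> (2::real)" shows "phi z \<le> (z - z^2/4) / 4"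
  unfolding phi_def using one_minus_exp_le2[OF assms] by (intro divide_right_mono) auto

lemma phi_mono: "a \<le> b \<Longrightarrow> phi a \<le> phi b"
  unfolding phi_def by simp

lemma phi_le: "phi z \<le> z / 4"
  unfolding phi_def using one_minus_exp_le[of z] by simp

lemma phi_lin: assumes "0 \<le> z" "z \<le> 1" shows "(1 - exp (-1)) * z / 4 \<le> phi z"
  unfolding phi_def using one_minus_exp_scale[OF assms, of 1] by (simp add: mult.commute)

lemma phi_two: assumes "0 \<le> a" "0 \<le> b" shows "(1 - phi a) * (1 - phi b) \<le> 1 - phi (a + b)"
proof -
  have A: "exp (- a) \<le> 1" "exp (- b) \<le> 1" using assms by auto
  have "0 \<le> (1 - exp (- a)) * (1 - exp (- b))" using A by (intro mult_nonneg_nonneg) auto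
  then have k: "exp (- a) + exp (- b) \<le> 1 + exp (- a) * exp (- b)" by (simp add: algebra_simps)
  have e: "exp (- (a + b)) = exp (- a) * exp (- b)" by (simp add: exp_add[symmetric])
  have "(1 - phi a) * (1 - phi b) = (9 + 3 * exp (- a) + 3 * exp (- b) + exp (- a) * exp (- b)) / 16"
    unfolding phi_def by (simp add: field_simps)
  moreover have "1 - phi (a + b) = (3 + exp (- a) * exp (- b)) / 4"
    unfolding phi_def e by (simp add: field_simps)
  ultimately show ?thesis using k by simp
qed

lemma phi_le1: "0 \<le> 1 - phi t"
proof -
  have "1 - exp (- t) \<le> 1" by simp
  then have "(1 - exp (- t)) / 4 \<le> 1 / 4" by (simp add: divide_right_mono)
  then show ?thesis unfolding phi_def by linarith
qed

lemma phi_prod: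
  assumes "finite A" "\<And>j. j \<in> A \<Longrightarrow> 0 \<le> z j"
  shows "(\<Prod>j\<in>A. 1 - phi (z j)) \<le> 1 - phi (\<Sum>j\<in>A. z j)"
  using assms
proof (induction A rule: finite_induct)
  case empty then show ?case by (simp add: phi_def)
next
  case (insert a A)
  have nn: "0 \<le> 1 - phi (z a)" by (rule phi_le1)
  have "(\<Prod>j\<in>insert a A. 1 - phi (z j)) = (1 - phi (z a)) * (\<Prod>j\<in>A. 1 - phi (z j))"
    using insert by simp
  also have "\<dots> \<le> (1 - phi (z a)) * (1 - phi (\<Sum>j\<in>A. z j))"
    using insert nn by (intro mult_left_mono) auto
  also have "\<dots> \<le> 1 - phi (z a + (\<Sum>j\<in>A. z j))"
    using insert by (intro phi_two) (auto intro: sum_nonneg)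
  finally show ?case using insert by simp
qed


locale spsc =
  fixes S :: "'s set" and V :: "'v set" and U :: "'u set"
    and s :: "'s \<Rightarrow> real" and c :: "'v \<Rightarrow> real"
    and isvc :: "'u \<Rightarrow> 's" and T :: "'u \<Rightarrow> 'v set" and w :: "'u \<Rightarrow> real"
    and x :: "'s \<Rightarrow> 'v \<Rightarrow> real" and y :: "'u \<Rightarrow> real"
  assumes inst: "spsc_instance S V U s c isvc T w"
    and opt: "lp_optimal S V U s c isvc T w x y"
begin

lemma finS: "finite S" and finV: "finite V" and finU: "finite U"
  and spos: "i \<in> S \<Longrightarrow> s i > 0" and cpos: "j \<in> V \<Longrightarrow> c j > 0"
  and isvcS: "k \<in> U \<Longrightarrow> isvc k \<in> S" and TV: "k \<in> U \<Longrightarrow> T k \<subseteq> V"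
  and wpos: "k \<in> U \<Longrightarrow> w k > 0"
  using inst unfolding spsc_instance_def by auto

lemma lpf: "lp_feasible S V U s c isvc T x y"
  using opt unfolding lp_optimal_def by auto

lemma y_bounds: "k \<in> U \<Longrightarrow> 0 \<le> y k \<and> y k \<le> (\<Sum>j\<in>T k. x (isvc k) j) \<and> y k \<le> 1"
  using lpf unfolding lp_feasible_def by auto

lemma x_bounds: "i \<in> S \<Longrightarrow> j \<in> V \<Longrightarrow> 0 \<le> x i j \<and> x i j \<le> 1 \<and> (s i > c j \<longrightarrow> x i j = 0)"
  using lpf unfolding lp_feasible_def by auto

lemma cap: "j \<in> V \<Longrightarrow> (\<Sum>i\<in>S. x i j * s i) \<le> c j"
  using lpf unfolding lp_feasible_def by auto

lemma R_le: "opt_reward S V U s c isvc T w \<le> (\<Sum>k\<in>U. y k * w k)"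
proof -
  let ?F = "{X \<in> S \<rightarrow>\<^sub>E Pow V. feasible_placement S V s c X}"
  have finF: "finite ?F"
    by (rule finite_subset[of _ "S \<rightarrow>\<^sub>E Pow V"]) (auto intro!: finite_PiE finS finV)
  have "(\<lambda>i\<in>S. {}) \<in> ?F"
    using cpos unfolding feasible_placement_def by (auto simp: less_imp_le)
  hence "?F \<noteq> {}" by blast
  then have "opt_reward S V U s c isvc T w \<in> total_reward U isvc T w ` ?F"
    unfolding opt_reward_def using finF by (intro Max_in) auto
  then obtain X where XF: "X \<in> ?F" and R: "opt_reward S V U s c isvc T w = total_reward U isvc T w X"
    by auto
  define x' where "x' i j = (if j \<in> X i then 1 else 0::real)" for i j
  define y' where "y' k = (if T k \<inter> X (isvc k) \<noteq> {} then 1 else 0::real)" for k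
  have feas: "feasible_placement S V s c X" using XF by auto
  have "lp_feasible S V U s c isvc T x' y'"
    unfolding lp_feasible_def
  proof (intro conjI ballI)
    fix k assume k: "k \<in> U"
    show "0 \<le> y' k" "y' k \<le> 1" by (auto simp: y'_def)
    show "y' k \<le> (\<Sum>j\<in>T k. x' (isvc k) j)"
    proof (cases "T k \<inter> X (isvc k) = {}")
      case True then show ?thesis by (auto simp: y'_def x'_def intro: sum_nonneg)
    next
      case False
      then obtain j where j: "j \<in> T k" "j \<in> X (isvc k)" by auto
      have "finite (T k)" using TV[OF k] finV finite_subset by blast
      then have "x' (isvc k) j \<le> (\<Sum>j\<in>T k. x' (isvc k) j)"
        using j by (intro member_le_sum) (auto simp: x'_def)
      then show ?thesis using False j by (auto simp: y'_def x'_def)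
    qed
  next
    fix j assume j: "j \<in> V"
    have "(\<Sum>i\<in>S. s i * (if j \<in> X i then 1 else 0)) \<le> c j"
      using feas j unfolding feasible_placement_def by auto
    then show "(\<Sum>i\<in>S. x' i j * s i) \<le> c j"
      by (simp add: x'_def mult.commute)
  next
    fix i j assume i: "i \<in> S" and j: "j \<in> V"
    show "0 \<le> x' i j" "x' i j \<le> 1" by (auto simp: x'_def)
    show "c j < s i \<longrightarrow> x' i j = 0"
    proof
      assume lt: "c j < s i"
      show "x' i j = 0"
      proof (rule ccontr)
        assume "x' i j \<noteq> 0"
        then have jX: "j \<in> X i" by (auto simp: x'_def split: if_splits)
        have "s i * (if j \<in> X i then 1 else 0) \<le> (\<Sum>i\<in>S. s i * (if j \<in> X i then 1 else 0))"
          using i finS spos by (intro member_le_sum) (auto simp: less_imp_le)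
        also have "\<dots> \<le> c j"
          using feas j unfolding feasible_placement_def by auto
        finally show False using jX lt by simp
      qed
    qed
  qed
  then have "(\<Sum>k\<in>U. y' k * w k) \<le> (\<Sum>k\<in>U. y k * w k)"
    using opt unfolding lp_optimal_def by blast
  moreover have "total_reward U isvc T w X = (\<Sum>k\<in>U. y' k * w k)"
    unfolding total_reward_def y'_def by (simp add: mult.commute)
  ultimately show ?thesis using R by simp
qed

end

context spsc
begin

abbreviation "P j \<kappa> \<equiv> Pcls S s c j \<kappa>"
abbreviation "d j \<kappa> \<equiv> dcls S s c x j \<kappa>"
abbreviation "n j q \<equiv> ncnt S s c x j q"

definition SL :: "'v \<Rightarrow> nat \<Rightarrow> ('v \<times> cls \<times> nat) set" where
  "SL j a = (if a = 1 then {(j,Plus,0)} else if a = 2 then {(j,Minus,0),(j,Minus,1)}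
     else if a = 3 then {(j, Lvl q, m) | q m. 1 \<le> q \<and> m < n j q} else {})"

lemma slots_eq: "slots S V s c x \<zeta> = (\<Union>j\<in>V. SL j (\<zeta> j))"
  unfolding slots_def SL_def by (auto simp: less_2_cases_iff)

lemma P_sub: "P j \<kappa> \<subseteq> S"
  unfolding Pcls_def by (auto split: cls.splits)

lemma finP: "finite (P j \<kappa>)"
  using finite_subset[OF P_sub finS] .

lemma n_nz: "n j q \<noteq> 0 \<Longrightarrow> d j (Lvl q) \<noteq> 0"
  unfolding ncnt_def by auto

lemma d_nz_P: "d j \<kappa> \<noteq> 0 \<Longrightarrow> P j \<kappa> \<noteq> {}"
  unfolding dcls_def by auto

lemma fin_nq: assumes j: "j \<in> V" shows "finite {q. n j q \<noteq> 0}"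
proof -
  have "{q. n j q \<noteq> 0} \<subseteq> (\<Union>i\<in>S. {q. s i \<le> (1/2) ^ (q - 1) * c j * (1/4)})"
  proof
    fix q assume "q \<in> {q. n j q \<noteq> 0}"
    then have "P j (Lvl q) \<noteq> {}" using n_nz d_nz_P by auto
    then show "q \<in> (\<Union>i\<in>S. {q. s i \<le> (1/2) ^ (q - 1) * c j * (1/4)})"
      unfolding Pcls_def by auto
  qed
  moreover have "finite {q. s i \<le> (1/2) ^ (q - 1) * c j * (1/4)}" if i: "i \<in> S" for i
  proof -
    have pos: "0 < 4 * s i / c j" using spos[OF i] cpos[OF j] by simp
    obtain N where N: "(1/2::real) ^ N < 4 * s i / c j"
      using real_arch_pow_inv[OF pos, of "1/2"] by auto
    have "{q. s i \<le> (1/2) ^ (q - 1) * c j * (1/4)} \<subseteq> {..N}"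
    proof
      fix q assume "q \<in> {q. s i \<le> (1/2) ^ (q - 1) * c j * (1/4)}"
      then have "4 * s i / c j \<le> (1/2) ^ (q - 1)" using cpos[OF j] by (simp add: field_simps)
      then have "(1/2::real) ^ N < (1/2) ^ (q - 1)" using N by linarith
      then have "q - 1 < N" by (simp add: power_strict_decreasing_iff)
      then show "q \<in> {..N}" by simp
    qed
    then show ?thesis using finite_subset by blast
  qed
  ultimately show ?thesis using finS by (meson finite_UN_I finite_subset)
qed

lemma finSL: assumes j: "j \<in> V" shows "finite (SL j a)"
proof -
  have "{(j, Lvl q, m) | q m. 1 \<le> q \<and> m < n j q} \<subseteq>
      (\<lambda>(q,m). (j, Lvl q, m)) ` (SIGMA q:{q. n j q \<noteq> 0}. {..<n j q})"
    by auto
  moreover have "finite (SIGMA q:{q. n j q \<noteq> 0}. {..<n j q})"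
    using fin_nq[OF j] by auto
  ultimately have "finite {(j, Lvl q, m) | q m. 1 \<le> q \<and> m < n j q}"
    by (meson finite_imageI finite_subset)
  then show ?thesis unfolding SL_def by auto
qed

lemma fin_slots: "finite (slots S V s c x \<zeta>)"
  unfolding slots_eq using finV finSL by auto

end

context spsc
begin

definition gq :: "'v set \<Rightarrow> 's \<Rightarrow> ('v \<times> cls \<times> nat) \<Rightarrow> 's \<Rightarrow> real" where
  "gq A i0 \<sigma> i' = x i' (fst \<sigma>) / d (fst \<sigma>) (fst (snd \<sigma>)) * (if fst \<sigma> \<in> A \<and> i' = i0 then 0 else 1)"

definition qq :: "'v set \<Rightarrow> 's \<Rightarrow> ('v \<times> cls \<times> nat) \<Rightarrow> real" where
  "qq A i0 \<sigma> = (\<Sum>i'\<in>P (fst \<sigma>) (fst (snd \<sigma>)). gq A i0 \<sigma> i')"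

definition G :: "'v set \<Rightarrow> 's \<Rightarrow> 'v \<Rightarrow> real" where
  "G A i0 j = (\<Sum>a\<in>{1,2,3::nat}. zeta_prob S s c x j a * (\<Prod>\<sigma>\<in>SL j a. qq A i0 \<sigma>))"

lemma tau_sum:
  "(\<Sum>\<tau>\<in>allocations S V s c x \<zeta>. \<Prod>\<sigma>\<in>slots S V s c x \<zeta>. gq A i0 \<sigma> (\<tau> \<sigma>))
    = (\<Prod>\<sigma>\<in>slots S V s c x \<zeta>. qq A i0 \<sigma>)"
  unfolding allocations_def qq_def
  by (rule prod_sum_PiE[symmetric]) (auto intro: fin_slots finP)

lemma ind_prod:
  assumes "finite \<Lambda>"
  shows "(if T' \<inter> placement_of \<Lambda> \<tau> i0 \<noteq> {} then 1 else 0::real)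
     = 1 - (\<Prod>\<sigma>\<in>\<Lambda>. if fst \<sigma> \<in> T' \<and> \<tau> \<sigma> = i0 then 0 else 1)"
proof (cases "\<exists>\<sigma>\<in>\<Lambda>. fst \<sigma> \<in> T' \<and> \<tau> \<sigma> = i0")
  case True
  then have "T' \<inter> placement_of \<Lambda> \<tau> i0 \<noteq> {}" unfolding placement_of_def by auto
  moreover have "(\<Prod>\<sigma>\<in>\<Lambda>. if fst \<sigma> \<in> T' \<and> \<tau> \<sigma> = i0 then 0 else 1::real) = 0"
    using True assms by (auto simp: prod_zero_iff)
  ultimately show ?thesis by simp
next
  case False
  then have "T' \<inter> placement_of \<Lambda> \<tau> i0 = {}" unfolding placement_of_def by auto
  moreover have "(\<Prod>\<sigma>\<in>\<Lambda>. if fst \<sigma> \<in> T' \<and> \<tau> \<sigma> = i0 then 0 else 1::real) = 1"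
    using False by (intro prod.neutral) auto
  ultimately show ?thesis by simp
qed

lemma inner:
  "(\<Sum>\<tau>\<in>allocations S V s c x \<zeta>. tau_prob S V s c x \<zeta> \<tau> *
      (if T' \<inter> placement_of (slots S V s c x \<zeta>) \<tau> i0 \<noteq> {} then 1 else 0))
   = (\<Prod>\<sigma>\<in>slots S V s c x \<zeta>. qq {} i0 \<sigma>) - (\<Prod>\<sigma>\<in>slots S V s c x \<zeta>. qq T' i0 \<sigma>)"
proof -
  let ?L = "slots S V s c x \<zeta>"
  have "tau_prob S V s c x \<zeta> \<tau> *
      (if T' \<inter> placement_of ?L \<tau> i0 \<noteq> {} then 1 else 0)
     = (\<Prod>\<sigma>\<in>?L. gq {} i0 \<sigma> (\<tau> \<sigma>)) - (\<Prod>\<sigma>\<in>?L. gq T' i0 \<sigma> (\<tau> \<sigma>))" for \<tau>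
  proof -
    have tp: "tau_prob S V s c x \<zeta> \<tau> = (\<Prod>\<sigma>\<in>?L. gq {} i0 \<sigma> (\<tau> \<sigma>))"
      unfolding tau_prob_def gq_def by simp
    have "(\<Prod>\<sigma>\<in>?L. gq {} i0 \<sigma> (\<tau> \<sigma>)) * (\<Prod>\<sigma>\<in>?L. if fst \<sigma> \<in> T' \<and> \<tau> \<sigma> = i0 then 0 else 1)
        = (\<Prod>\<sigma>\<in>?L. gq T' i0 \<sigma> (\<tau> \<sigma>))"
      unfolding prod.distrib[symmetric] by (intro prod.cong) (auto simp: gq_def)
    then show ?thesis unfolding ind_prod[OF fin_slots] tp by (simp add: algebra_simps)
  qed
  then show ?thesis by (simp add: sum_subtractf tau_sum)
qed

lemma slots_prod:
  "(\<Prod>\<sigma>\<in>slots S V s c x \<zeta>. f \<sigma>) = (\<Prod>j\<in>V. \<Prod>\<sigma>\<in>SL j (\<zeta> j). f \<sigma>)"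
  unfolding slots_eq
proof (rule prod.UNION_disjoint)
  show "finite V" by (rule finV)
  show "\<forall>j\<in>V. finite (SL j (\<zeta> j))" using finSL by auto
  have "SL j a \<subseteq> {\<sigma>. fst \<sigma> = j}" for j a unfolding SL_def by auto
  then show "\<forall>i\<in>V. \<forall>j\<in>V. i \<noteq> j \<longrightarrow> SL i (\<zeta> i) \<inter> SL j (\<zeta> j) = {}" by blast
qed

lemma M_eq:
  "(\<Sum>\<zeta>\<in>(V \<rightarrow>\<^sub>E {1, 2, 3::nat}). (\<Prod>j\<in>V. zeta_prob S s c x j (\<zeta> j)) *
        (\<Prod>\<sigma>\<in>slots S V s c x \<zeta>. qq A i0 \<sigma>)) = (\<Prod>j\<in>V. G A i0 j)"
proof -
  have "(\<Prod>j\<in>V. zeta_prob S s c x j (\<zeta> j)) * (\<Prod>\<sigma>\<in>slots S V s c x \<zeta>. qq A i0 \<sigma>)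
      = (\<Prod>j\<in>V. zeta_prob S s c x j (\<zeta> j) * (\<Prod>\<sigma>\<in>SL j (\<zeta> j). qq A i0 \<sigma>))" for \<zeta>
    unfolding slots_prod prod.distrib ..
  then have "(\<Sum>\<zeta>\<in>(V \<rightarrow>\<^sub>E {1, 2, 3::nat}). (\<Prod>j\<in>V. zeta_prob S s c x j (\<zeta> j)) *
        (\<Prod>\<sigma>\<in>slots S V s c x \<zeta>. qq A i0 \<sigma>)) =
      (\<Sum>\<zeta>\<in>(V \<rightarrow>\<^sub>E {1, 2, 3::nat}). \<Prod>j\<in>V. zeta_prob S s c x j (\<zeta> j) * (\<Prod>\<sigma>\<in>SL j (\<zeta> j). qq A i0 \<sigma>))"
    by simp
  also have "\<dots> = (\<Prod>j\<in>V. G A i0 j)"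
    unfolding G_def by (rule prod_sum_PiE[symmetric]) (auto intro: finV)
  finally show ?thesis .
qed

lemma E_eq:
  "expected_reward S V U s c isvc T w x =
    (\<Sum>k\<in>U. w k * ((\<Prod>j\<in>V. G {} (isvc k) j) - (\<Prod>j\<in>V. G (T k) (isvc k) j)))"
proof -
  let ?Z = "V \<rightarrow>\<^sub>E {1, 2, 3::nat}"
  let ?pz = "\<lambda>\<zeta>. \<Prod>j\<in>V. zeta_prob S s c x j (\<zeta> j)"
  let ?L = "\<lambda>\<zeta>. slots S V s c x \<zeta>"
  let ?ind = "\<lambda>\<zeta> \<tau> k. (if T k \<inter> placement_of (?L \<zeta>) \<tau> (isvc k) \<noteq> {} then 1 else 0::real)"
  have "expected_reward S V U s c isvc T w x =
     (\<Sum>\<zeta>\<in>?Z. ?pz \<zeta> * (\<Sum>\<tau>\<in>allocations S V s c x \<zeta>.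
           tau_prob S V s c x \<zeta> \<tau> * (\<Sum>k\<in>U. ?ind \<zeta> \<tau> k * w k)))"
    unfolding expected_reward_def ..
  also have "\<dots> = (\<Sum>\<zeta>\<in>?Z. \<Sum>k\<in>U. w k * (?pz \<zeta> * (\<Sum>\<tau>\<in>allocations S V s c x \<zeta>.
           tau_prob S V s c x \<zeta> \<tau> * ?ind \<zeta> \<tau> k)))"
  proof (rule sum.cong[OF refl])
    fix \<zeta>
    show "?pz \<zeta> * (\<Sum>\<tau>\<in>allocations S V s c x \<zeta>.
           tau_prob S V s c x \<zeta> \<tau> * (\<Sum>k\<in>U. ?ind \<zeta> \<tau> k * w k)) =
      (\<Sum>k\<in>U. w k * (?pz \<zeta> * (\<Sum>\<tau>\<in>allocations S V s c x \<zeta>.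
           tau_prob S V s c x \<zeta> \<tau> * ?ind \<zeta> \<tau> k)))"
      by (simp add: sum_distrib_left sum_distrib_right sum.swap[of _ U] ac_simps)
  qed
  also have "\<dots> = (\<Sum>k\<in>U. w k * (\<Sum>\<zeta>\<in>?Z. ?pz \<zeta> * (\<Sum>\<tau>\<in>allocations S V s c x \<zeta>.
           tau_prob S V s c x \<zeta> \<tau> * ?ind \<zeta> \<tau> k)))"
    by (subst sum.swap) (simp add: sum_distrib_left)
  also have "\<dots> = (\<Sum>k\<in>U. w k * ((\<Prod>j\<in>V. G {} (isvc k) j) - (\<Prod>j\<in>V. G (T k) (isvc k) j)))"
  proof (rule sum.cong[OF refl])
    fix k
    have "(\<Sum>\<zeta>\<in>?Z. ?pz \<zeta> * (\<Sum>\<tau>\<in>allocations S V s c x \<zeta>. tau_prob S V s c x \<zeta> \<tau> * ?ind \<zeta> \<tau> k))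
      = (\<Sum>\<zeta>\<in>?Z. ?pz \<zeta> * (\<Prod>\<sigma>\<in>?L \<zeta>. qq {} (isvc k) \<sigma>)) - (\<Sum>\<zeta>\<in>?Z. ?pz \<zeta> * (\<Prod>\<sigma>\<in>?L \<zeta>. qq (T k) (isvc k) \<sigma>))"
      unfolding inner by (simp add: sum_subtractf algebra_simps)
    then show "w k * (\<Sum>\<zeta>\<in>?Z. ?pz \<zeta> * (\<Sum>\<tau>\<in>allocations S V s c x \<zeta>. tau_prob S V s c x \<zeta> \<tau> * ?ind \<zeta> \<tau> k))
      = w k * ((\<Prod>j\<in>V. G {} (isvc k) j) - (\<Prod>j\<in>V. G (T k) (isvc k) j))"
      unfolding M_eq by simp
  qed
  finally show ?thesis .
qed

end

lemma prod_subset_le: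
  fixes f :: "'a \<Rightarrow> real"
  assumes "finite B" "A \<subseteq> B" "\<And>b. b \<in> B \<Longrightarrow> 0 \<le> f b \<and> f b \<le> 1"
  shows "prod f B \<le> prod f A"
proof -
  have "prod f B = prod f A * prod f (B - A)"
    using prod.subset_diff[OF assms(2,1)] by (simp add: mult.commute)
  moreover have "prod f (B - A) \<le> 1" using assms by (intro prod_le_1) auto
  moreover have "0 \<le> prod f A" using assms by (intro prod_nonneg) auto
  ultimately show ?thesis by (simp add: mult_left_le)
qed

lemma exists_level:
  fixes s c :: real
  assumes "0 < s" "0 < c" "s \<le> c / 4"
  shows "\<exists>q\<ge>1. (1/2) ^ q * c * (1/4) < s \<and> s \<le> (1/2) ^ (q - 1) * c * (1/4)"
proof -
  have pos: "0 < 4 * s / c" using assms by simp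
  obtain N where N: "(1/2::real) ^ N < 4 * s / c"
    using real_arch_pow_inv[OF pos, of "1/2"] by auto
  define Q where "Q = (\<lambda>q. (1/2::real) ^ q * c * (1/4) < s)"
  have QN: "Q N" unfolding Q_def using N assms by (simp add: field_simps)
  define q where "q = (LEAST q. Q q)"
  have Qq: "Q q" unfolding q_def by (rule LeastI[of Q N, OF QN])
  have q0: "q \<noteq> 0"
  proof
    assume "q = 0" then show False using Qq assms unfolding Q_def by simp
  qed
  have "\<not> Q (q - 1)" using q0 unfolding q_def by (intro not_less_Least) auto
  then have "s \<le> (1/2) ^ (q - 1) * c * (1/4)" unfolding Q_def by simp
  moreover have "1 \<le> q" using q0 by simp
  ultimately show ?thesis using Qq unfolding Q_def by blast
qed

context spsc
begin

abbreviation "zp j a \<equiv> zeta_prob S s c x j a"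
abbreviation "sm j \<equiv> (\<Sum>i\<in>{i\<in>S. s i \<le> c j * (1/4)}. s i * x i j)"

lemma x_nn: "i \<in> S \<Longrightarrow> j \<in> V \<Longrightarrow> 0 \<le> x i j" using x_bounds by auto

lemma x_nnP: "i \<in> P j \<kappa> \<Longrightarrow> j \<in> V \<Longrightarrow> 0 \<le> x i j" using x_nn P_sub by blast

lemma d_nn: "j \<in> V \<Longrightarrow> 0 \<le> d j \<kappa>"
  unfolding dcls_def using x_nnP by (intro sum_nonneg) auto

lemma x_le_d: "j \<in> V \<Longrightarrow> i \<in> P j \<kappa> \<Longrightarrow> x i j \<le> d j \<kappa>"
  unfolding dcls_def using x_nnP finP by (intro member_le_sum) auto

lemma qq_eq: "qq A i0 (j, \<kappa>, m) = (if j \<in> A then (d j \<kappa> - (if i0 \<in> P j \<kappa> then x i0 j else 0)) / d j \<kappa>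
     else d j \<kappa> / d j \<kappa>)"
proof (cases "j \<in> A")
  case True
  have "qq A i0 (j, \<kappa>, m) = (\<Sum>i'\<in>P j \<kappa>. x i' j * (if i' = i0 then 0 else 1)) / d j \<kappa>"
    unfolding qq_def gq_def using True by (simp add: sum_divide_distrib)
  also have "(\<Sum>i'\<in>P j \<kappa>. x i' j * (if i' = i0 then 0 else 1)) =
     (\<Sum>i'\<in>P j \<kappa>. x i' j - (if i' = i0 then x i' j else 0))"
    by (intro sum.cong) auto
  also have "\<dots> = d j \<kappa> - (if i0 \<in> P j \<kappa> then x i0 j else 0)"
    unfolding sum_subtractf dcls_def using finP by (simp add: sum.delta')
  finally show ?thesis using True by simp
next
  case False
  then show ?thesis unfolding qq_def gq_def dcls_def by (simp add: sum_divide_distrib[symmetric])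
qed

lemma qq_bounds: assumes "fst \<sigma> \<in> V" shows "0 \<le> qq A i0 \<sigma> \<and> qq A i0 \<sigma> \<le> 1"
proof -
  obtain j \<kappa> m where \<sigma>: "\<sigma> = (j, \<kappa>, m)" by (cases \<sigma>) auto
  have j: "j \<in> V" using assms \<sigma> by simp
  have dn: "0 \<le> d j \<kappa>" using d_nn[OF j] .
  define e where "e = (if i0 \<in> P j \<kappa> then x i0 j else 0)"
  have e: "0 \<le> e" "e \<le> d j \<kappa>" unfolding e_def using x_le_d[OF j] x_nnP[OF _ j] dn by auto
  have "0 \<le> (d j \<kappa> - e) / d j \<kappa> \<and> (d j \<kappa> - e) / d j \<kappa> \<le> 1"
    using e dn by (cases "d j \<kappa> = 0") (auto simp: divide_le_eq_1)
  moreover have "0 \<le> d j \<kappa> / d j \<kappa> \<and> d j \<kappa> / d j \<kappa> \<le> 1" using dn by (cases "d j \<kappa> = 0") auto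
  ultimately show ?thesis unfolding \<sigma> qq_eq e_def[symmetric] by auto
qed

lemma SL_fst: "\<sigma> \<in> SL j a \<Longrightarrow> fst \<sigma> = j"
  unfolding SL_def by (auto split: if_splits)

lemma prodSL_bounds: assumes "j \<in> V"
  shows "0 \<le> (\<Prod>\<sigma>\<in>SL j a. qq A i0 \<sigma>) \<and> (\<Prod>\<sigma>\<in>SL j a. qq A i0 \<sigma>) \<le> 1"
proof -
  have "\<forall>\<sigma>\<in>SL j a. 0 \<le> qq A i0 \<sigma> \<and> qq A i0 \<sigma> \<le> 1"
    using qq_bounds SL_fst assms by metis
  then show ?thesis by (intro conjI prod_nonneg prod_le_1) auto
qed

lemma zp_sum: "zp j 1 + zp j 2 + zp j 3 = 1"
  unfolding zeta_prob_def by simp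

lemma capacity: assumes j: "j \<in> V"
  shows "d j Plus / 2 + d j Minus / 4 + sm j / c j \<le> 1"
proof -
  let ?A = "P j Plus" and ?B = "P j Minus" and ?C = "{i\<in>S. s i \<le> c j * (1/4)}"
  have cj: "0 < c j" using cpos[OF j] .
  have finC: "finite ?C" using finS by auto
  have "d j Plus * (c j / 2) = (\<Sum>i\<in>?A. x i j * (c j / 2))"
    unfolding dcls_def by (simp add: sum_distrib_right)
  also have "\<dots> \<le> (\<Sum>i\<in>?A. x i j * s i)"
    using P_sub x_nn[OF _ j] by (intro sum_mono mult_left_mono) (auto simp: Pcls_def)
  finally have a: "d j Plus * (c j / 2) \<le> (\<Sum>i\<in>?A. x i j * s i)" .
  have "d j Minus * (c j / 4) = (\<Sum>i\<in>?B. x i j * (c j / 4))"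
    unfolding dcls_def by (simp add: sum_distrib_right)
  also have "\<dots> \<le> (\<Sum>i\<in>?B. x i j * s i)"
    using P_sub x_nn[OF _ j] by (intro sum_mono mult_left_mono) (auto simp: Pcls_def)
  finally have b: "d j Minus * (c j / 4) \<le> (\<Sum>i\<in>?B. x i j * s i)" .
  have cc: "sm j = (\<Sum>i\<in>?C. x i j * s i)" by (simp add: mult.commute)
  have dAB: "?A \<inter> ?B = {}" and dABC: "(?A \<union> ?B) \<inter> ?C = {}" unfolding Pcls_def using cj by auto
  have "(\<Sum>i\<in>?A. x i j * s i) + (\<Sum>i\<in>?B. x i j * s i) + (\<Sum>i\<in>?C. x i j * s i)
      = (\<Sum>i\<in>?A \<union> ?B \<union> ?C. x i j * s i)"
    using dAB dABC finP finC by (simp add: sum.union_disjoint)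
  also have "\<dots> \<le> (\<Sum>i\<in>S. x i j * s i)"
  proof (rule sum_mono2[OF finS])
    show "?A \<union> ?B \<union> ?C \<subseteq> S" using P_sub by blast
    show "0 \<le> x b j * s b" if "b \<in> S - (?A \<union> ?B \<union> ?C)" for b
      using that x_nn[of b j] spos[of b] j by (auto intro!: mult_nonneg_nonneg)
  qed
  also have "\<dots> \<le> c j" using cap[OF j] .
  finally have "d j Plus * (c j / 2) + d j Minus * (c j / 4) + sm j \<le> c j" using a b cc by linarith
  then have "(d j Plus / 2 + d j Minus / 4 + sm j / c j) * c j \<le> 1 * c j"
    using cj by (simp add: algebra_simps)
  then show ?thesis using cj by (simp only: mult_le_cancel_right)
qed

lemma sm_nn: "j \<in> V \<Longrightarrow> 0 \<le> sm j"
  using spos x_nn by (intro sum_nonneg mult_nonneg_nonneg) (auto intro: less_imp_le)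

lemma zp_facts: assumes j: "j \<in> V"
  shows "zp j 1 = d j Plus / 4" "zp j 2 = hnode S s c x j / 4" "0 \<le> zp j 1" "0 \<le> zp j 2"
    "1/4 \<le> zp j 3" "sm j / c j \<le> zp j 3" "0 \<le> zp j 3"
proof -
  have cap: "d j Plus / 2 + d j Minus / 4 + sm j / c j \<le> 1" using capacity[OF j] .
  have t: "0 \<le> sm j / c j" using sm_nn[OF j] cpos[OF j] by simp
  have dp: "0 \<le> d j Plus" and dm: "0 \<le> d j Minus" using d_nn[OF j] by auto
  show "zp j 1 = d j Plus / 4" "zp j 2 = hnode S s c x j / 4" unfolding zeta_prob_def by auto
  then show "0 \<le> zp j 1" "0 \<le> zp j 2" using dp dm unfolding hnode_def by (auto split: if_splits)
  show "1/4 \<le> zp j 3" "sm j / c j \<le> zp j 3" 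
    using cap t dp dm unfolding zeta_prob_def hnode_def by auto
  then show "0 \<le> zp j 3" using t by linarith
qed

lemma G_expand: "G A i0 j = zp j 1 * (\<Prod>\<sigma>\<in>SL j 1. qq A i0 \<sigma>) + zp j 2 * (\<Prod>\<sigma>\<in>SL j 2. qq A i0 \<sigma>)
    + zp j 3 * (\<Prod>\<sigma>\<in>SL j 3. qq A i0 \<sigma>)"
  unfolding G_def by simp

lemma G_empty: assumes j: "j \<in> V" shows "G {} i0 j = 1"
proof -
  have 1: "zp j 1 * (\<Prod>\<sigma>\<in>SL j 1. qq {} i0 \<sigma>) = zp j 1"
    using zp_facts(1)[OF j] by (simp add: SL_def qq_eq)
  have "zp j 2 * (\<Prod>\<sigma>\<in>SL j 2. qq {} i0 \<sigma>) = zp j 2 * (d j Minus / d j Minus * (d j Minus / d j Minus))"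
    by (simp add: SL_def qq_eq)
  also have "\<dots> = zp j 2"
    using zp_facts(2)[OF j] by (cases "d j Minus = 0") (auto simp: hnode_def)
  finally have 2: "zp j 2 * (\<Prod>\<sigma>\<in>SL j 2. qq {} i0 \<sigma>) = zp j 2" .
  have "(\<Prod>\<sigma>\<in>SL j 3. qq {} i0 \<sigma>) = 1"
  proof (rule prod.neutral, rule ballI)
    fix \<sigma> assume "\<sigma> \<in> SL j 3"
    then obtain q m where \<sigma>: "\<sigma> = (j, Lvl q, m)" "m < n j q" unfolding SL_def by auto
    then have "d j (Lvl q) \<noteq> 0" using n_nz by auto
    then show "qq {} i0 \<sigma> = 1" unfolding \<sigma> qq_eq by simp
  qed
  then show ?thesis unfolding G_expand 1 2 using zp_sum[of j] by simp
qed

lemma G_notin: assumes "j \<notin> A" shows "G A i0 j = G {} i0 j"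
proof -
  have "qq A i0 \<sigma> = qq {} i0 \<sigma>" if "\<sigma> \<in> SL j a" for \<sigma> a
    using SL_fst[OF that] assms unfolding qq_def gq_def by simp
  then show ?thesis unfolding G_def by (intro sum.cong refl arg_cong2[where f="(*)"] prod.cong) auto
qed

lemma G_nonneg: assumes j: "j \<in> V" shows "0 \<le> G A i0 j"
  unfolding G_expand using zp_facts[OF j] prodSL_bounds[OF j]
  by (intro add_nonneg_nonneg mult_nonneg_nonneg) auto

lemma G_le: assumes j: "j \<in> V" and a: "a \<in> {1,2,3}"
  shows "G A i0 j \<le> 1 - zp j a * (1 - (\<Prod>\<sigma>\<in>SL j a. qq A i0 \<sigma>))"
proof -
  have le: "zp j b * (\<Prod>\<sigma>\<in>SL j b. qq A i0 \<sigma>) \<le> zp j b" if "b \<in> {1,2,3}" for b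
    using that zp_facts[OF j] prodSL_bounds[OF j, of A i0 b] by (auto intro: mult_left_le)
  show ?thesis using a le[of 1] le[of 2] le[of 3] zp_sum[of j] unfolding G_expand
    by (auto simp: algebra_simps)
qed

end

context spsc
begin

lemma G_plus:
  assumes j: "j \<in> V" and jA: "j \<in> A" and i0: "i0 \<in> P j Plus" and xp: "0 < x i0 j"
  shows "G A i0 j \<le> 1 - phi (x i0 j)"
proof -
  let ?d = "d j Plus" and ?xi = "x i0 j"
  have dx: "?xi \<le> ?d" using x_le_d[OF j i0] .
  then have dp: "0 < ?d" using xp by linarith
  have Q: "(\<Prod>\<sigma>\<in>SL j 1. qq A i0 \<sigma>) = (?d - ?xi) / ?d"
    using jA i0 by (simp add: SL_def qq_eq)
  have "zp j 1 * (1 - (?d - ?xi) / ?d) = ?xi / 4"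
    using zp_facts(1)[OF j] dp by (simp add: field_simps)
  then have "G A i0 j \<le> 1 - ?xi / 4" using G_le[OF j, of 1 A i0] Q by simp
  then show ?thesis using phi_le[of ?xi] by linarith
qed

lemma G_minus:
  assumes j: "j \<in> V" and jA: "j \<in> A" and i0: "i0 \<in> P j Minus" and xp: "0 < x i0 j"
    and x1: "x i0 j \<le> 1"
  shows "G A i0 j \<le> 1 - phi (x i0 j)"
proof -
  let ?d = "d j Minus" and ?xi = "x i0 j"
  have dx: "?xi \<le> ?d" using x_le_d[OF j i0] .
  then have dp: "0 < ?d" using xp by linarith
  have Q: "(\<Prod>\<sigma>\<in>SL j 2. qq A i0 \<sigma>) = (?d - ?xi) / ?d * ((?d - ?xi) / ?d)"
    using jA i0 by (simp add: SL_def qq_eq)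
  have oneQ: "1 - (?d - ?xi) / ?d * ((?d - ?xi) / ?d) = 2 * ?xi / ?d - ?xi^2 / ?d^2"
    using dp by (simp add: field_simps power2_eq_square)
  have key: "phi ?xi \<le> zp j 2 * (1 - (?d - ?xi) / ?d * ((?d - ?xi) / ?d))"
  proof (cases "?d < 2")
    case True
    then have z: "zp j 2 = ?d / 4" using zp_facts(2)[OF j] by (simp add: hnode_def)
    have "zp j 2 * (2 * ?xi / ?d - ?xi^2 / ?d^2) = ?xi / 2 - ?xi^2 / (4 * ?d)"
      unfolding z using dp by (simp add: field_simps power2_eq_square)
    moreover have "?xi^2 / (4 * ?d) \<le> ?xi / 4"
      using dp dx xp by (simp add: field_simps power2_eq_square mult_right_mono)
    ultimately show ?thesis unfolding oneQ using phi_le[of ?xi] by linarith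
  next
    case False
    then have z: "zp j 2 = ?d / 8" using zp_facts(2)[OF j] by (simp add: hnode_def)
    have e1: "zp j 2 * (2 * ?xi / ?d - ?xi^2 / ?d^2) = ?xi / 4 - ?xi^2 / (8 * ?d)"
      unfolding z using dp by (simp add: field_simps power2_eq_square)
    have i1: "?xi^2 / (8 * ?d) \<le> ?xi^2 / 16"
      using False by (intro divide_left_mono) auto
    have "phi ?xi \<le> (?xi - ?xi^2 / 4) / 4"
      using phi_le2[of ?xi] xp x1 by simp
    also have "\<dots> = ?xi / 4 - ?xi^2 / 16" by (simp add: field_simps)
    also have "\<dots> \<le> ?xi / 4 - ?xi^2 / (8 * ?d)" using i1 by simp
    also have "\<dots> = zp j 2 * (2 * ?xi / ?d - ?xi^2 / ?d^2)" using e1 by simp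
    finally show ?thesis unfolding oneQ .
  qed
  show ?thesis using G_le[OF j, of 2 A i0] Q key by simp
qed

lemma G_level:
  assumes j: "j \<in> V" and jA: "j \<in> A" and q0: "1 \<le> q0" and i0: "i0 \<in> P j (Lvl q0)"
    and xp: "0 < x i0 j" and x1: "x i0 j \<le> 1"
  shows "G A i0 j \<le> 1 - phi (x i0 j)"
proof -
  let ?d = "d j (Lvl q0)" and ?xi = "x i0 j" and ?n = "n j q0" and ?v = "vnode S s c x j"
  define t where "t = sm j / c j"
  have i0S: "i0 \<in> S" using i0 P_sub by blast
  have cj: "0 < c j" using cpos[OF j] .
  have dx: "?xi \<le> ?d" using x_le_d[OF j i0] .
  then have dp: "0 < ?d" using xp by linarith
  have "(1/2::real) ^ (q0 - 1) \<le> 1" by (simp add: power_le_one)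
  then have "(1/2::real) ^ (q0 - 1) * c j * (1/4) \<le> c j * (1/4)" using cj by simp
  then have si0: "s i0 \<le> c j * (1/4)" using i0 unfolding Pcls_def by auto
  have nn: "0 \<le> s i * x i j" if "i \<in> S" for i
    using spos[OF that] x_nn[OF that j] by simp
  have "s i0 * ?xi \<le> sm j"
    using i0S si0 finS nn by (intro member_le_sum) auto
  moreover have "0 < s i0 * ?xi" using spos[OF i0S] xp by simp
  ultimately have smp: "0 < sm j" by linarith
  have tp: "0 < t" unfolding t_def using smp cj by simp
  have v_eq: "?v = 1 / (4 * t)" unfolding vnode_def t_def using cj smp by (simp add: field_simps)
  have vp: "0 < ?v" using v_eq tp by simp
  have n_ge: "?v * ?d \<le> real ?n" unfolding ncnt_def by (rule real_nat_ceiling_ge)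
  let ?L0 = "(\<lambda>m. (j, Lvl q0, m)) ` {..<?n}"
  have L0: "?L0 \<subseteq> SL j 3" using q0 unfolding SL_def by auto
  have "(\<Prod>\<sigma>\<in>SL j 3. qq A i0 \<sigma>) \<le> (\<Prod>\<sigma>\<in>?L0. qq A i0 \<sigma>)"
    using finSL[OF j] L0 qq_bounds SL_fst j by (intro prod_subset_le) auto
  also have "(\<Prod>\<sigma>\<in>?L0. qq A i0 \<sigma>) = (\<Prod>m\<in>{..<?n}. qq A i0 (j, Lvl q0, m))"
    by (subst prod.reindex) (auto simp: inj_on_def)
  also have "\<dots> = ((?d - ?xi) / ?d) ^ ?n"
    using jA i0 by (simp add: qq_eq)
  also have "\<dots> \<le> (exp (- (?xi / ?d))) ^ ?n"
  proof (rule power_mono)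
    have "(?d - ?xi) / ?d = 1 + (- (?xi / ?d))" using dp by (simp add: field_simps)
    also have "\<dots> \<le> exp (- (?xi / ?d))" by (rule exp_ge_add_one_self)
    finally show "(?d - ?xi) / ?d \<le> exp (- (?xi / ?d))" .
    show "0 \<le> (?d - ?xi) / ?d" using dx dp by simp
  qed
  also have "\<dots> = exp (real ?n * (- (?xi / ?d)))" by (rule exp_of_nat_mult[symmetric])
  also have "\<dots> \<le> exp (- (?v * ?xi))"
  proof -
    have "?v * ?d * (?xi / ?d) \<le> real ?n * (?xi / ?d)"
      using n_ge dp xp by (intro mult_right_mono) auto
    then have "?v * ?xi \<le> real ?n * (?xi / ?d)" using dp by simp
    then show ?thesis by simp
  qed
  finally have Q3: "(\<Prod>\<sigma>\<in>SL j 3. qq A i0 \<sigma>) \<le> exp (- (?v * ?xi))" .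
  have z3: "1/4 \<le> zp j 3" "t \<le> zp j 3" using zp_facts(5,6)[OF j] unfolding t_def by auto
  have key: "phi ?xi \<le> zp j 3 * (1 - exp (- (?v * ?xi)))"
  proof (cases "t \<le> 1/4")
    case True
    then have "1 \<le> ?v" unfolding v_eq using tp by (simp add: field_simps)
    then have "?xi \<le> ?v * ?xi" using xp by simp
    then have "exp (- (?v * ?xi)) \<le> exp (- ?xi)" by simp
    then have a: "1 - exp (- ?xi) \<le> 1 - exp (- (?v * ?xi))" by simp
    have b: "0 \<le> 1 - exp (- ?xi)" using xp by simp
    have "phi ?xi = 1/4 * (1 - exp (- ?xi))" unfolding phi_def by simp
    also have "\<dots> \<le> zp j 3 * (1 - exp (- (?v * ?xi)))"
      using z3 a b by (intro mult_mono) auto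
    finally show ?thesis .
  next
    case False
    then have v1: "?v \<le> 1" unfolding v_eq using tp by (simp add: field_simps)
    have a: "?v * (1 - exp (- ?xi)) \<le> 1 - exp (- (?v * ?xi))"
      using one_minus_exp_scale[of ?v ?xi] vp v1 by simp
    have b: "0 \<le> ?v * (1 - exp (- ?xi))" using xp vp by simp
    have "phi ?xi = t * (?v * (1 - exp (- ?xi)))" unfolding phi_def v_eq using tp by (simp add: field_simps)
    also have "\<dots> \<le> zp j 3 * (1 - exp (- (?v * ?xi)))"
      using z3 a b by (intro mult_mono) auto
    finally show ?thesis .
  qed
  have "zp j 3 * (1 - exp (- (?v * ?xi))) \<le> zp j 3 * (1 - (\<Prod>\<sigma>\<in>SL j 3. qq A i0 \<sigma>))"
    using Q3 zp_facts(7)[OF j] by (intro mult_left_mono) auto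
  then show ?thesis using G_le[OF j, of 3 A i0] key by simp
qed

end

context spsc
begin

lemma G_main:
  assumes j: "j \<in> V" and jA: "j \<in> A" and i0S: "i0 \<in> S"
  shows "G A i0 j \<le> 1 - phi (x i0 j)"
proof (cases "x i0 j = 0")
  case True
  have "G A i0 j \<le> 1 - zp j 1 * (1 - (\<Prod>\<sigma>\<in>SL j 1. qq A i0 \<sigma>))" using G_le[OF j, of 1] by simp
  moreover have "0 \<le> zp j 1 * (1 - (\<Prod>\<sigma>\<in>SL j 1. qq A i0 \<sigma>))"
    using zp_facts(3)[OF j] prodSL_bounds[OF j, of A i0 1] by simp
  ultimately show ?thesis using True by (simp add: phi_def)
next
  case False
  have xb: "0 \<le> x i0 j" "x i0 j \<le> 1" "c j < s i0 \<longrightarrow> x i0 j = 0" using x_bounds[OF i0S j] by auto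
  then have xp: "0 < x i0 j" using False by simp
  have sc: "s i0 \<le> c j" using xb False by force
  have cj: "0 < c j" and sp: "0 < s i0" using cpos[OF j] spos[OF i0S] by auto
  consider "c j / 2 < s i0" | "c j / 4 < s i0 \<and> s i0 \<le> c j / 2" | "s i0 \<le> c j / 4" by linarith
  then show ?thesis
  proof cases
    case 1
    then have "i0 \<in> P j Plus" using sc i0S unfolding Pcls_def by simp
    then show ?thesis using G_plus[OF j jA _ xp] by simp
  next
    case 2
    then have "i0 \<in> P j Minus" using i0S unfolding Pcls_def by simp
    then show ?thesis using G_minus[OF j jA _ xp xb(2)] by simp
  next
    case 3
    obtain q0 where q0: "1 \<le> q0" "(1/2) ^ q0 * c j * (1/4) < s i0" "s i0 \<le> (1/2) ^ (q0 - 1) * c j * (1/4)"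
      using exists_level[OF sp cj 3] by blast
    then have "i0 \<in> P j (Lvl q0)" using i0S unfolding Pcls_def by simp
    then show ?thesis using G_level[OF j jA q0(1) _ xp xb(2)] by simp
  qed
qed

lemma user_bound:
  assumes k: "k \<in> U"
  shows "(1 - exp (-1)) * y k / 4 \<le> (\<Prod>j\<in>V. G {} (isvc k) j) - (\<Prod>j\<in>V. G (T k) (isvc k) j)"
proof -
  let ?i = "isvc k" and ?T = "T k"
  have iS: "?i \<in> S" using isvcS[OF k] .
  have TV': "?T \<subseteq> V" using TV[OF k] .
  have finT: "finite ?T" using finite_subset[OF TV' finV] .
  have one: "(\<Prod>j\<in>V. G {} ?i j) = 1" using G_empty by (intro prod.neutral) auto
  have "(\<Prod>j\<in>V. G ?T ?i j) = (\<Prod>j\<in>V - ?T. G ?T ?i j) * (\<Prod>j\<in>?T. G ?T ?i j)"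
    using prod.subset_diff[OF TV' finV] .
  also have "(\<Prod>j\<in>V - ?T. G ?T ?i j) = 1"
  proof (rule prod.neutral, rule ballI)
    fix j assume "j \<in> V - ?T"
    then show "G ?T ?i j = 1" using G_notin[of j ?T ?i] G_empty[of j ?i] by simp
  qed
  finally have "(\<Prod>j\<in>V. G ?T ?i j) = (\<Prod>j\<in>?T. G ?T ?i j)" by simp
  also have "\<dots> \<le> (\<Prod>j\<in>?T. 1 - phi (x ?i j))"
    using G_nonneg G_main iS TV' by (intro prod_mono) auto
  also have "\<dots> \<le> 1 - phi (\<Sum>j\<in>?T. x ?i j)"
    using finT x_nn iS TV' by (intro phi_prod) auto
  finally have a: "(\<Prod>j\<in>V. G ?T ?i j) \<le> 1 - phi (\<Sum>j\<in>?T. x ?i j)" .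
  have yb: "0 \<le> y k" "y k \<le> (\<Sum>j\<in>?T. x ?i j)" "y k \<le> 1" using y_bounds[OF k] by auto
  have "(1 - exp (-1)) * y k / 4 \<le> phi (y k)" using phi_lin yb by simp
  also have "\<dots> \<le> phi (\<Sum>j\<in>?T. x ?i j)" using phi_mono yb by simp
  finally show ?thesis using a one by linarith
qed

lemma main: "(1 - exp (-1)) * opt_reward S V U s c isvc T w / 4 \<le> expected_reward S V U s c isvc T w x"
proof -
  have e: "0 \<le> 1 - exp (-1::real)" by simp
  have "(1 - exp (-1)) * opt_reward S V U s c isvc T w / 4 \<le> (1 - exp (-1)) * (\<Sum>k\<in>U. y k * w k) / 4"
    using R_le e by (intro divide_right_mono mult_left_mono) auto
  also have "\<dots> = (\<Sum>k\<in>U. w k * ((1 - exp (-1)) * y k / 4))"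
    by (simp add: sum_distrib_left sum_divide_distrib ac_simps)
  also have "\<dots> \<le> (\<Sum>k\<in>U. w k * ((\<Prod>j\<in>V. G {} (isvc k) j) - (\<Prod>j\<in>V. G (T k) (isvc k) j)))"
    using user_bound wpos by (intro sum_mono mult_left_mono) (auto intro: less_imp_le)
  also have "\<dots> = expected_reward S V U s c isvc T w x" using E_eq by simp
  finally show ?thesis .
qed

end

theorem theorem10:
  fixes S :: "'s set" and V :: "'v set" and U :: "'u set"
    and s :: "'s \<Rightarrow> real" and c :: "'v \<Rightarrow> real"
    and isvc :: "'u \<Rightarrow> 's" and T :: "'u \<Rightarrow> 'v set" and w :: "'u \<Rightarrow> real"
    and x :: "'s \<Rightarrow> 'v \<Rightarrow> real" and y :: "'u \<Rightarrow> real"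
  assumes "spsc_instance S V U s c isvc T w"
    and "lp_optimal S V U s c isvc T w x y"
  shows "expected_reward S V U s c isvc T w x \<ge> (1 - exp (-1)) * opt_reward S V U s c isvc T w / 4"
proof -
  interpret spsc S V U s c isvc T w x y using assms by unfold_locales
  show ?thesis using main by simp
qed


end
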